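(* Consider the active-subspace NMPC scheme (Algorithm 1, described in the context below) based on the reduced problem $\widehat{\mathscr{P}}(x_k,\tilde{\mathbf{w}}_k)$, in which the shift-based update of the feasible guess is replaced by $\tilde{\mathbf{u}}_{k+1}=F(\mathbf{u}_k)$ for a generic constructor of feasible guesses $F:\mathbb{U}^N\to\mathbb{U}^N$. Then this active-subspace NMPC scheme is recursively feasible, i.e., whenever $\widehat{\mathscr{P}}(x_k,\tilde{\mathbf{w}}_k)$ is feasible, so is $\widehat{\mathscr{P}}(x_{k+1},\tilde{\mathbf{w}}_{k+1})$.
   Context: System: $x^+=f(x,u)$ with continuous $f:\mathbb{X}\times\mathbb{U}\to\mathbb{X}$, $\mathbb{X}\subseteq\mathbb{R}^n$, $\mathbb{U}\subseteq\mathbb{R}^m$ closed, containing the origin in their interior; nominal setting $x_{k+1}=f(x_k,u_{k|k})$. $\mathscr{P}(x_k)$: the finite-horizon ($N$) optimal control problem of minimizing $\sum_{i=0}^{N-1}\ell(x_{k+i|k},u_{k+i|k})+V_f(x_{k+N|k})$ over $\mathbf{u}_k=[u_{k|k}^\top,\dots,u_{k+N-1|k}^\top]^\top$ subject to $x_{k|k}=x_k$, $x_{k+i+1|k}=f(x_{k+i|k},u_{k+i|k})$, $u_{k+i|k}\in\mathbb{U}$, $x_{k+i|k}\in\mathbb{X}$, $x_{k+N|k}\in\mathbb{X}_f$; after eliminating states: $\min_{\mathbf{u}_k}J(x_k,\mathbf{u}_k)$ s.t. $g(x_k,\mathbf{u}_k)\le0$. Generic constructor for feasible guesses: a map $F:\mathbb{U}^N\to\mathbb{U}^N$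 such that, whenever $\mathbf{u}_k$ is feasible for $\mathscr{P}(x_k)$ (the predicted control sequence at time $k$), $F(\mathbf{u}_k)$ is feasible for $\mathscr{P}(x_{k+1})$ with $x_{k+1}=f(x_k,u_{k|k})$. $T=[T_1\ T_2]\in\mathbb{R}^{Nm\times Nm}$ orthonormal, $T_1$ with $q$ columns. Reduced problem $\widehat{\mathscr{P}}(x_k,\tilde{\mathbf{w}}_k)$: minimize $J(x_k,T_1\mathbf{v}_k+\mu_kT_2\tilde{\mathbf{w}}_k)$ over $(\mathbf{v}_k,\mu_k)\in\mathbb{R}^q\times\mathbb{R}$ subject to $g(x_k,T_1\mathbf{v}_k+\mu_kT_2\tilde{\mathbf{w}}_k)\le0$. Algorithm (modified Algorithm 1): at $k=0$ solve $\mathscr{P}(x_0)$ for a feasible $\tilde{\mathbf{u}}_0$, set $\tilde{\mathbf{w}}_0=T_2^\top\tilde{\mathbf{u}}_0$. At each $k$: solve $\widehat{\mathscr{P}}(x_k,\tilde{\mathbf{w}}_k)$ for $(\mathbf{v}_k^\star,\mu_k^\star)$; if $J(x_k,T_1\mathbf{v}_k^\star+\mu_k^\star T_2\tilde{\mathbf{w}}_k)\le J(x_k,\tilde{\mathbf{u}}_k)$ set $\mathbf{u}_k=T_1\mathbf{v}_k^\star+\mu_k^\star T_2\tilde{\mathbf{w}}_k$, else $\mathbf{u}_k=\tilde{\mathbf{u}}_k$; apply $u_{k|k}$; set $\tilde{\mathbf{u}}_{k+1}=F(\mathbf{u}_k)$ and $\tilde{\mathbf{w}}_{k+1}=T_2^\top\tilde{\mathbf{u}}_{k+1}$.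 *)

theory Defs
  imports "HOL-Analysis.Analysis"
begin

text \<open>Predicted control sequences are functions nat => real^'m (only the
entries 0..N-1 matter).  The stacked vector in R^(Nm) is indexed by pairs
(i, j) with i < N (time) and j :: 'm (input component).  The orthonormal
matrix T = [T1 T2] has rows indexed by such pairs and columns indexed by
'q + 'r: column Inl a is a column of T1 (q = CARD('q) columns), column Inr b
a column of T2.\<close>

fun pred_state :: "('x \<Rightarrow> 'u \<Rightarrow> 'x) \<Rightarrow> 'x \<Rightarrow> (nat \<Rightarrow> 'u) \<Rightarrow> nat \<Rightarrow> 'x" where
  "pred_state f x u 0 = x"
| "pred_state f x u (Suc i) = f (pred_state f x u i) (u i)"

definition feasible_P ::
  "('x \<Rightarrow> 'u \<Rightarrow> 'x) \<Rightarrow> 'x set \<Rightarrow> 'u set \<Rightarrow> 'x set \<Rightarrow> nat \<Rightarrow> 'x \<Rightarrow> (nat \<Rightarrow> 'u) \<Rightarrow> bool" where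
  "feasible_P f X U Xf N x u \<longleftrightarrow>
     (\<forall>i<N. u i \<in> U) \<and> (\<forall>i<N. pred_state f x u i \<in> X) \<and> pred_state f x u N \<in> Xf"

definition cost_J ::
  "('x \<Rightarrow> 'u \<Rightarrow> 'x) \<Rightarrow> ('x \<Rightarrow> 'u \<Rightarrow> real) \<Rightarrow> ('x \<Rightarrow> real) \<Rightarrow> nat \<Rightarrow> 'x \<Rightarrow> (nat \<Rightarrow> 'u) \<Rightarrow> real" where
  "cost_J f l Vf N x u = (\<Sum>i<N. l (pred_state f x u i) (u i)) + Vf (pred_state f x u N)"

definition orthonormal_T ::
  "nat \<Rightarrow> (nat \<Rightarrow> 'm::finite \<Rightarrow> ('q::finite + 'r::finite) \<Rightarrow> real) \<Rightarrow> bool" where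
  "orthonormal_T N T \<longleftrightarrow> CARD('q + 'r) = N * CARD('m) \<and>
     (\<forall>c c'. (\<Sum>i<N. \<Sum>j\<in>UNIV. T i j c * T i j c') = (if c = c' then 1 else 0))"

definition recon ::
  "(nat \<Rightarrow> 'm::finite \<Rightarrow> ('q::finite + 'r::finite) \<Rightarrow> real) \<Rightarrow> real^'q \<Rightarrow> real \<Rightarrow> real^'r \<Rightarrow> nat \<Rightarrow> real^'m" where
  "recon T v mu w = (\<lambda>i. \<chi> j. \<Sum>c\<in>UNIV. T i j c *
       (case c of Inl a \<Rightarrow> v $ a | Inr b \<Rightarrow> mu * w $ b))"

definition T2t ::
  "nat \<Rightarrow> (nat \<Rightarrow> 'm::finite \<Rightarrow> ('q::finite + 'r::finite) \<Rightarrow> real) \<Rightarrow> (nat \<Rightarrow> real^'m) \<Rightarrow> real^'r" where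
  "T2t N T u = (\<chi> b. \<Sum>i<N. \<Sum>j\<in>UNIV. T i j (Inr b) * u i $ j)"

definition feasible_Phat ::
  "('x \<Rightarrow> real^'m \<Rightarrow> 'x) \<Rightarrow> 'x set \<Rightarrow> (real^'m) set \<Rightarrow> 'x set \<Rightarrow> nat \<Rightarrow>
   (nat \<Rightarrow> 'm::finite \<Rightarrow> ('q::finite + 'r::finite) \<Rightarrow> real) \<Rightarrow> 'x \<Rightarrow> real^'r \<Rightarrow> bool" where
  "feasible_Phat f X U Xf N T x w \<longleftrightarrow>
     (\<exists>(v::real^'q) mu. feasible_P f X U Xf N x (recon T v mu w))"

end

theory Submission
  imports Defs Jordan_Normal_Form.Determinant
begin

lemma rows_orth:
  fixes T :: "nat \<Rightarrow> 'm::finite \<Rightarrow> ('q::finite + 'r::finite) \<Rightarrow> real"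
  assumes o: "orthonormal_T N T" and i: "i < N" and i': "i' < N"
  shows "(\<Sum>c\<in>UNIV. T i j c * T i' j' c) = (if (i,j) = (i',j') then 1 else 0)"
proof -
  let ?n = "N * CARD('m)"
  let ?R = "{0..<N} \<times> (UNIV :: 'm set)"
  have cR: "card ?R = ?n" by (simp add: card_cartesian_product)
  have cC: "CARD('q + 'r) = ?n" using o unfolding orthonormal_T_def by simp
  obtain hr where hr: "bij_betw hr {0..<?n} ?R"
    using ex_bij_betw_nat_finite[of ?R] cR by auto
  obtain hc where hc: "bij_betw hc {0..<?n} (UNIV :: ('q+'r) set)"
    using ex_bij_betw_nat_finite[of "UNIV :: ('q+'r) set"] cC by auto
  define A :: "real mat" where "A = Matrix.mat ?n ?n (\<lambda>(p,s). T (fst (hr p)) (snd (hr p)) (hc s))"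
  have A: "A \<in> carrier_mat ?n ?n" unfolding A_def by simp
  have At: "transpose_mat A \<in> carrier_mat ?n ?n" using A by simp
  have sumR: "(\<Sum>p<?n. g (hr p)) = (\<Sum>i<N. \<Sum>j\<in>UNIV. g (i,j))" for g :: "nat \<times> 'm \<Rightarrow> real"
  proof -
    have "(\<Sum>p<?n. g (hr p)) = (\<Sum>x\<in>?R. g x)"
      using sum.reindex_bij_betw[OF hr, of g] by (simp add: atLeast0LessThan)
    also have "\<dots> = (\<Sum>i<N. \<Sum>j\<in>UNIV. g (i,j))"
      by (simp add: sum.cartesian_product atLeast0LessThan)
    finally show ?thesis .
  qed
  have sumC: "(\<Sum>s<?n. g (hc s)) = (\<Sum>c\<in>UNIV. g c)" for g :: "('q+'r) \<Rightarrow> real"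
    using sum.reindex_bij_betw[OF hc, of g] by (simp add: atLeast0LessThan)
  have "transpose_mat A * A = 1\<^sub>m ?n"
  proof (rule eq_matI)
    fix s s' assume s: "s < dim_row (1\<^sub>m ?n)" and s': "s' < dim_col (1\<^sub>m ?n)"
    have "(transpose_mat A * A) $$ (s, s') = (\<Sum>p<?n. T (fst (hr p)) (snd (hr p)) (hc s) * T (fst (hr p)) (snd (hr p)) (hc s'))"
      using s s' A unfolding A_def
      by (simp add: scalar_prod_def atLeast0LessThan)
    also have "\<dots> = (\<Sum>i<N. \<Sum>j\<in>UNIV. T i j (hc s) * T i j (hc s'))"
      by (rule sumR[of "\<lambda>x. T (fst x) (snd x) (hc s) * T (fst x) (snd x) (hc s')", simplified])
    also have "\<dots> = (if hc s = hc s' then 1 else 0)" by (rule conjunct2[OF o[unfolded orthonormal_T_def], THEN spec, THEN spec])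
    also have "\<dots> = (if s = s' then 1 else 0)"
    proof -
      have "s \<in> {0..<?n}" "s' \<in> {0..<?n}" using s s' by auto
      thus ?thesis using inj_on_eq_iff[OF bij_betw_imp_inj_on[OF hc]] by presburger
    qed
    finally show "(transpose_mat A * A) $$ (s, s') = 1\<^sub>m ?n $$ (s, s')" using s s' by simp
  qed (use A in auto)
  hence AA: "A * transpose_mat A = 1\<^sub>m ?n" using mat_mult_left_right_inverse[OF At A] by simp
  have im: "hr ` {0..<?n} = ?R" using bij_betw_imp_surj_on[OF hr] .
  have "(i,j) \<in> hr ` {0..<?n}" using i im by simp
  then obtain p where p0: "p \<in> {0..<?n}" and p2: "hr p = (i,j)" by (rule imageE) simp
  have "(i',j') \<in> hr ` {0..<?n}" using i' im by simp
  then obtain p' where p0': "p' \<in> {0..<?n}" and p2': "hr p' = (i',j')" by (rule imageE) simp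
  have p: "p < ?n" "hr p = (i,j)" using p0 p2 by auto
  have p': "p' < ?n" "hr p' = (i',j')" using p0' p2' by auto
  have "(A * transpose_mat A) $$ (p, p') = (\<Sum>s<?n. T i j (hc s) * T i' j' (hc s))"
    using p p' A unfolding A_def by (simp add: scalar_prod_def atLeast0LessThan)
  also have "\<dots> = (\<Sum>c\<in>UNIV. T i j c * T i' j' c)"
    by (rule sumC[of "\<lambda>c. T i j c * T i' j' c"])
  finally have "(\<Sum>c\<in>UNIV. T i j c * T i' j' c) = (if p = p' then 1 else 0)"
    using AA p p' by simp
  also have "\<dots> = (if (i,j) = (i',j') then 1 else 0)"
  proof -
    have "p \<in> {0..<?n}" "p' \<in> {0..<?n}" using p p' by auto
    hence "(p = p') = (hr p = hr p')" using inj_on_eq_iff[OF bij_betw_imp_inj_on[OF hr]] by presburger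
    thus ?thesis using p p' by simp
  qed
  finally show ?thesis .
qed


lemma recon_id:
  fixes T :: "nat \<Rightarrow> 'm::finite \<Rightarrow> ('q::finite + 'r::finite) \<Rightarrow> real"
  assumes o: "orthonormal_T N T" and i: "i < N"
  shows "recon T (\<chi> a. \<Sum>i'<N. \<Sum>j'\<in>UNIV. T i' j' (Inl a) * vec_nth (u i') j') 1 (T2t N T u) i = u i"
proof -
  have "vec_nth (recon T (\<chi> a. \<Sum>i'<N. \<Sum>j'\<in>UNIV. T i' j' (Inl a) * vec_nth (u i') j') 1 (T2t N T u) i) j = vec_nth (u i) j" for j
  proof -
  have "vec_nth (recon T (\<chi> a. \<Sum>i'<N. \<Sum>j'\<in>UNIV. T i' j' (Inl a) * vec_nth (u i') j') 1 (T2t N T u) i) j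
      = (\<Sum>c\<in>UNIV. T i j c * (\<Sum>i'<N. \<Sum>j'\<in>UNIV. T i' j' c * vec_nth (u i') j'))"
    unfolding recon_def T2t_def vec_lambda_beta by (intro sum.cong refl) (auto split: sum.split)
  also have "\<dots> = (\<Sum>c\<in>UNIV. \<Sum>i'<N. \<Sum>j'\<in>UNIV. T i j c * T i' j' c * vec_nth (u i') j')"
    by (simp add: sum_distrib_left mult.assoc)
  also have "\<dots> = (\<Sum>i'<N. \<Sum>c\<in>UNIV. \<Sum>j'\<in>UNIV. T i j c * T i' j' c * vec_nth (u i') j')"
    by (rule sum.swap)
  also have "\<dots> = (\<Sum>i'<N. \<Sum>j'\<in>UNIV. \<Sum>c\<in>UNIV. T i j c * T i' j' c * vec_nth (u i') j')"
    by (rule sum.cong[OF refl], rule sum.swap)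
  also have "\<dots> = (\<Sum>i'<N. \<Sum>j'\<in>UNIV. (\<Sum>c\<in>UNIV. T i j c * T i' j' c) * vec_nth (u i') j')"
    by (simp add: sum_distrib_right)
  also have "\<dots> = (\<Sum>i'<N. \<Sum>j'\<in>UNIV. (if (i,j) = (i',j') then vec_nth (u i') j' else 0))"
    by (intro sum.cong refl) (simp add: rows_orth[OF o i])
  also have "\<dots> = (\<Sum>i'<N. if i = i' then vec_nth (u i) j else 0)"
  proof (intro sum.cong refl)
    fix i' show "(\<Sum>j'\<in>UNIV. (if (i,j) = (i',j') then vec_nth (u i') j' else 0)) = (if i = i' then vec_nth (u i) j else 0)"
      by (cases "i = i'") simp_all
  qed
  also have "\<dots> = vec_nth (u i) j" using i by simp
  finally show ?thesis .
  qed
  thus ?thesis by (rule Finite_Cartesian_Product.vec_eq_iff[THEN iffD2, OF allI])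
qed

lemma feasible_cong:
  assumes "\<forall>i<N. u i = u' i"
  shows "feasible_P f X U Xf N x u = feasible_P f X U Xf N x u'"
proof -
  have "\<forall>i\<le>N. pred_state f x u i = pred_state f x u' i"
  proof (intro allI impI)
    fix i assume "i \<le> N" thus "pred_state f x u i = pred_state f x u' i"
      using assms by (induction i) auto
  qed
  thus ?thesis using assms unfolding feasible_P_def by auto
qed

lemma feas_hat:
  fixes T :: "nat \<Rightarrow> 'm::finite \<Rightarrow> ('q::finite + 'r::finite) \<Rightarrow> real"
  assumes o: "orthonormal_T N T" and fe: "feasible_P f X U Xf N x u"
  shows "feasible_Phat f X U Xf N T x (T2t N T u)"
proof -
  let ?v = "(\<chi> a. \<Sum>i'<N. \<Sum>j'\<in>UNIV. T i' j' (Inl a) * vec_nth (u i') j') :: real^'q"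
  have eq: "\<forall>i<N. recon T ?v 1 (T2t N T u) i = u i" using recon_id[OF o] by blast
  have "feasible_P f X U Xf N x (recon T ?v 1 (T2t N T u))"
    using fe feasible_cong[OF eq, of f X U Xf x] by (simp only:)
  thus ?thesis unfolding feasible_Phat_def by blast
qed

theorem corollary1:
  fixes f :: "real^'n \<Rightarrow> real^'m \<Rightarrow> real^'n"
    and X Xf :: "(real^'n) set" and U :: "(real^'m) set"
    and l :: "real^'n \<Rightarrow> real^'m \<Rightarrow> real" and Vf :: "real^'n \<Rightarrow> real"
    and N :: nat
    and T :: "nat \<Rightarrow> 'm::finite \<Rightarrow> ('q::finite + 'r::finite) \<Rightarrow> real"
    and F :: "(nat \<Rightarrow> real^'m) \<Rightarrow> (nat \<Rightarrow> real^'m)"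
    and xs :: "nat \<Rightarrow> real^'n"
    and ut us :: "nat \<Rightarrow> (nat \<Rightarrow> real^'m)"
    and vs :: "nat \<Rightarrow> real^'q" and mus :: "nat \<Rightarrow> real"
  assumes f_maps: "\<forall>x\<in>X. \<forall>u\<in>U. f x u \<in> X"
    and f_cont: "continuous_on (X \<times> U) (\<lambda>(x, u). f x u)"
    and X_closed: "closed X" and U_closed: "closed U"
    and X_orig: "0 \<in> interior X" and U_orig: "0 \<in> interior U"
    and T_orth: "orthonormal_T N T"
    and F_maps: "\<forall>u. (\<forall>i<N. u i \<in> U) \<longrightarrow> (\<forall>i<N. F u i \<in> U)"
    and F_feas: "\<forall>x u. feasible_P f X U Xf N x u \<longrightarrow>
                       feasible_P f X U Xf N (f x (u 0)) (F u)"
    and init: "feasible_P f X U Xf N (xs 0) (ut 0)"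
    and solve: "\<forall>k. feasible_Phat f X U Xf N T (xs k) (T2t N T (ut k)) \<longrightarrow>
                  feasible_P f X U Xf N (xs k) (recon T (vs k) (mus k) (T2t N T (ut k)))"
    and select: "\<forall>k. us k =
                  (if cost_J f l Vf N (xs k) (recon T (vs k) (mus k) (T2t N T (ut k)))
                        \<le> cost_J f l Vf N (xs k) (ut k)
                   then recon T (vs k) (mus k) (T2t N T (ut k)) else ut k)"
    and dyn: "\<forall>k. xs (Suc k) = f (xs k) (us k 0)"
    and update: "\<forall>k. ut (Suc k) = F (us k)"
  shows "\<forall>k. feasible_Phat f X U Xf N T (xs k) (T2t N T (ut k)) \<longrightarrow>
             feasible_Phat f X U Xf N T (xs (Suc k)) (T2t N T (ut (Suc k)))"
  proof -
  have inv: "feasible_P f X U Xf N (xs k) (ut k)" for k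
  proof (induction k)
    case 0 show ?case using init .
  next
    case (Suc k)
    have "feasible_P f X U Xf N (xs k) (us k)"
    proof (cases "us k = ut k")
      case True thus ?thesis using Suc by simp
    next
      case False
      hence "us k = recon T (vs k) (mus k) (T2t N T (ut k))" using select by metis
      thus ?thesis using solve feas_hat[OF T_orth Suc] by simp
    qed
    thus ?case using F_feas dyn update by simp
  qed
  show ?thesis using feas_hat[OF T_orth inv] by blast
qed

end
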